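(* Let $\mathcal{X}$ be a metrizable manifold with boundary, let $\phi:\mathcal{X}\to\mathbb{R}^m$ be continuous, and let $\mathcal{F}\subseteq C(\mathbb{R}^m,\mathbb{R}^n)$ be dense for the topology of uniform convergence on compacts. Then the set $\{f\circ\phi: f\in\mathcal{F}\}$ is dense in $C(\mathcal{X},\mathbb{R}^n)$ (for the topology of uniform convergence on compacts) if and only if $\phi$ is injective.
   Context: A metrizable manifold with boundary is a metrizable topological space in which every point has an open neighbourhood homeomorphic to $\{z\in\mathbb{R}^k: \|z\|<1,\ z_k\ge 0\}$ for some $k$. $C(\mathcal{X},\mathbb{R}^n)$ denotes the continuous maps $\mathcal{X}\to\mathbb{R}^n$. *)

theory Defs
  imports "HOL-Analysis.Analysis"
begin

text \<open>The closed-at-the-bottom unit half-ball in R^k, embedded in nat => real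
  (coordinates 0..k-1; all others zero). On this subset the product topology of
  nat => real coincides with the Euclidean topology of R^k. For k = 0 it is the
  one-point space R^0.\<close>
definition half_ball :: "nat \<Rightarrow> (nat \<Rightarrow> real) set" where
  "half_ball k = {z. (\<forall>i\<ge>k. z i = 0) \<and> (\<Sum>i<k. (z i)\<^sup>2) < 1 \<and> (0 < k \<longrightarrow> 0 \<le> z (k - 1))}"

definition metrizable_manifold_with_boundary :: "'a topology \<Rightarrow> bool" where
  "metrizable_manifold_with_boundary X \<longleftrightarrow>
     metrizable_space X \<and>
     (\<forall>x\<in>topspace X. \<exists>U k. openin X U \<and> x \<in> U \<and>
         subtopology X U homeomorphic_space subtopology euclidean (half_ball k))"

definition dense_ucc :: "'a topology \<Rightarrow> ('a \<Rightarrow> 'b::metric_space) set \<Rightarrow> bool" where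
  "dense_ucc Y G \<longleftrightarrow>
     (\<forall>g. continuous_map Y euclidean g \<longrightarrow>
        (\<forall>K e. compactin Y K \<and> 0 < e \<longrightarrow> (\<exists>h\<in>G. \<forall>x\<in>K. dist (h x) (g x) < e)))"

end

theory Submission
  imports Defs
begin

theorem mainTheorem2:
  fixes X :: "'a topology"
    and \<phi> :: "'a \<Rightarrow> real ^ 'm"
    and F :: "(real ^ 'm \<Rightarrow> real ^ 'n) set"
  assumes "metrizable_manifold_with_boundary X"
    and "continuous_map X euclidean \<phi>"
    and "\<forall>f\<in>F. continuous_on UNIV f"
    and "dense_ucc euclidean F"
  shows "dense_ucc X ((\<lambda>f. f \<circ> \<phi>) ` F) \<longleftrightarrow> inj_on \<phi> (topspace X)"
proof
  have met: "metrizable_space X" using assms(1) unfolding metrizable_manifold_with_boundary_def by blast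
  assume D: "dense_ucc X ((\<lambda>f. f \<circ> \<phi>) ` F)"
  show "inj_on \<phi> (topspace X)"
  proof (rule inj_onI, rule ccontr)
    fix x y assume x: "x \<in> topspace X" and y: "y \<in> topspace X" and eq: "\<phi> x = \<phi> y" and ne: "x \<noteq> y"
    have cr: "completely_regular_space X" by (rule metrizable_imp_completely_regular_space[OF met])
    have cl: "closedin X {y}" by (rule closedin_Hausdorff_singleton[OF metrizable_imp_Hausdorff_space[OF met] y])
    obtain f :: "'a \<Rightarrow> real" where fc: "continuous_map X (top_of_set {0..1}) f" and f0: "f x = 0" and f1: "f ` {y} \<subseteq> {1}"
      using cr cl x ne unfolding completely_regular_space_def by blast
    have fc': "continuous_map X euclidean f"
      using fc continuous_map_into_fulltopology by blast
    define g :: "'a \<Rightarrow> real ^ 'n" where "g = (\<lambda>z. \<chi> i. f z)"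
    have cv: "continuous_map euclidean euclidean (\<lambda>t::real. (\<chi> i. t) :: real ^ 'n)"
      by (simp add: continuous_on_vec_lambda continuous_on_id)
    have gc: "continuous_map X euclidean g"
      unfolding g_def using continuous_map_compose[OF fc' cv] by (simp add: o_def)
    have K: "compactin X {x, y}" using x y by (simp add: finite_imp_compactin_eq)
    obtain h where hF: "h \<in> (\<lambda>f. f \<circ> \<phi>) ` F" and hK: "\<forall>z\<in>{x,y}. dist (h z) (g z) < 1/2"
      using D gc K unfolding dense_ucc_def by (metis half_gt_zero zero_less_one)
    have hxy: "h x = h y" using hF eq by auto
    have "dist (g x) (g y) < 1"
      using hK hxy dist_triangle3[of "g x" "g y" "h y"] by (simp add: dist_commute) 
    moreover have "dist (g x $ i) (g y $ i) \<le> dist (g x) (g y)" for i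
      by (rule dist_vec_nth_le)
    moreover have "dist (g x $ i) (g y $ i) = 1" for i
      using f0 f1 by (simp add: g_def dist_real_def)
    ultimately show False by (metis not_less)
  qed
next
  assume inj: "inj_on \<phi> (topspace X)"
  show "dense_ucc X ((\<lambda>f. f \<circ> \<phi>) ` F)"
    unfolding dense_ucc_def
  proof (intro allI impI, elim conjE)
    fix g :: "'a \<Rightarrow> real ^ 'n" and K and e :: real
    assume gc: "continuous_map X euclidean g" and K: "compactin X K" and e: "0 < e"
    have KX: "K \<subseteq> topspace X" using K compactin_subset_topspace by blast
    let ?S = "\<phi> ` K"
    have hm: "homeomorphic_map (subtopology X K) (top_of_set ?S) \<phi>"
    proof (rule continuous_imp_homeomorphic_map)
      show "continuous_map (subtopology X K) (top_of_set ?S) \<phi>"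
        using assms(2) by (simp add: continuous_map_in_subtopology continuous_map_from_subtopology image_mono KX inf.absorb2)
      show "compact_space (subtopology X K)" using K by (rule compact_space_subtopology)
      show "Hausdorff_space (top_of_set ?S)" by (simp add: Hausdorff_space_subtopology)
      show "\<phi> ` topspace (subtopology X K) = topspace (top_of_set ?S)"
        using KX by (simp add: inf.absorb2)
      show "inj_on \<phi> (topspace (subtopology X K))"
        using KX inj by (simp add: inf.absorb2 inj_on_subset)
    qed
    then obtain \<psi> where hms: "homeomorphic_maps (subtopology X K) (top_of_set ?S) \<phi> \<psi>"
      using homeomorphic_map_maps by blast
    have psic: "continuous_map (top_of_set ?S) (subtopology X K) \<psi>"
      and psi: "\<And>x. x \<in> K \<Longrightarrow> \<psi> (\<phi> x) = x"
      using hms KX unfolding homeomorphic_maps_def by (auto simp: inf.absorb2)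
    have gpc: "continuous_on ?S (g \<circ> \<psi>)"
      using continuous_map_compose[OF psic continuous_map_from_subtopology[OF gc]] by simp
    obtain G where Gc: "continuous_on UNIV G" and GS: "\<And>y. y \<in> ?S \<Longrightarrow> G y = (g \<circ> \<psi>) y"
      using Dugundji[of "UNIV :: (real^'n) set" UNIV ?S "g \<circ> \<psi>"] gpc
      by (metis closed_closedin compact_imp_closed image_compactin K assms(2) compactin_euclidean_iff
          convex_UNIV UNIV_not_empty subset_UNIV subtopology_UNIV)
    have Sc: "compactin euclidean ?S" using image_compactin[OF K assms(2)] .
    obtain f where fF: "f \<in> F" and fS: "\<forall>y\<in>?S. dist (f y) (G y) < e"
      using assms(4) Gc Sc e unfolding dense_ucc_def by (metis continuous_map_iff_continuous2)
    show "\<exists>h\<in>(\<lambda>f. f \<circ> \<phi>) ` F. \<forall>x\<in>K. dist (h x) (g x) < e"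
    proof (intro bexI ballI)
      fix x assume "x \<in> K"
      then show "dist ((f \<circ> \<phi>) x) (g x) < e" using fS GS psi by auto
    qed (use fF in \<open>auto simp: image_iff o_def\<close>)
  qed
qed

end
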